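(* Let $\mathbf{M}^2$ be a connected smooth oriented surface and $\alpha:\mathbf{M}^2\to\mathbf{R}^4$ a smooth immersion. Suppose $\nu$ is a unit normal vector field along $\alpha$ such that $II_\nu=\langle d^2\alpha,\nu\rangle=\lambda I$ for a nonzero constant $\lambda$, and that the Gaussian curvature satisfies $K(p)\neq\lambda^2$ for all $p\in\mathbf{M}^2$. Then $\alpha$ is hyperspherical (its image lies in a hypersphere of radius $1/|\lambda|$).
   Context: In a chart $(u,v)$, $E=\langle\alpha_u,\alpha_u\rangle$, $F=\langle\alpha_u,\alpha_v\rangle$, $G=\langle\alpha_v,\alpha_v\rangle$, $I=E\,du^2+2F\,du\,dv+G\,dv^2$. For a unit normal field $\nu$, $II_\nu=e_\nu du^2+2f_\nu du\,dv+g_\nu dv^2$ with $e_\nu=\langle\alpha_{uu},\nu\rangle$, $f_\nu=\langle\alpha_{uv},\nu\rangle$, $g_\nu=\langle\alpha_{vv},\nu\rangle$. For an orthonormal normal frame $\{\nu_1,\nu_2\}$ with coefficients $e_i,f_i,g_i$ of $II_{\nu_i}$, the Gaussian curvature is $K=\frac{e_1g_1-f_1^2+e_2g_2-f_2^2}{EG-F^2}$. An immersion is hyperspherical if its image is contained in a hypersphere (round $3$-sphere) of $\mathbf{R}^4$. *)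

theory Defs
  imports "HOL-Analysis.Analysis"
begin

definition pd :: "(real^2 \<Rightarrow> 'b::real_normed_vector) \<Rightarrow> 2 \<Rightarrow> real^2 \<Rightarrow> 'b" where
  "pd f i x = frechet_derivative f (at x) (axis i 1)"

fun Ck_on :: "nat \<Rightarrow> (real^2) set \<Rightarrow> (real^2 \<Rightarrow> 'b::real_normed_vector) \<Rightarrow> bool" where
  "Ck_on 0 U f = continuous_on U f"
| "Ck_on (Suc k) U f =
     ((\<forall>x\<in>U. f differentiable (at x)) \<and> (\<forall>i. Ck_on k U (pd f i)))"

definition smooth_on :: "(real^2) set \<Rightarrow> (real^2 \<Rightarrow> 'b::real_normed_vector) \<Rightarrow> bool" where
  "smooth_on U f = (\<forall>k. Ck_on k U f)"

definition is_param :: "'m topology \<Rightarrow> (real^2 \<Rightarrow> 'm) \<times> (real^2) set \<Rightarrow> bool" where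
  "is_param M c = (case c of (\<psi>, U) \<Rightarrow>
      open U \<and> openin M (\<psi> ` U) \<and>
      homeomorphic_map (subtopology euclidean U) (subtopology M (\<psi> ` U)) \<psi>)"

definition overlap :: "(real^2 \<Rightarrow> 'm) \<times> (real^2) set \<Rightarrow> (real^2 \<Rightarrow> 'm) \<times> (real^2) set \<Rightarrow> (real^2) set" where
  "overlap c1 c2 = {x \<in> snd c1. fst c1 x \<in> fst c2 ` snd c2}"

definition transition :: "(real^2 \<Rightarrow> 'm) \<times> (real^2) set \<Rightarrow> (real^2 \<Rightarrow> 'm) \<times> (real^2) set \<Rightarrow> real^2 \<Rightarrow> real^2" where
  "transition c1 c2 = inv_into (snd c2) (fst c2) \<circ> fst c1"

definition oriented_smooth_surface :: "'m topology \<Rightarrow> ((real^2 \<Rightarrow> 'm) \<times> (real^2) set) set \<Rightarrow> bool" where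
  "oriented_smooth_surface M A =
     (Hausdorff_space M \<and> second_countable M \<and>
      (\<forall>c\<in>A. is_param M c) \<and>
      (\<Union>c\<in>A. fst c ` snd c) = topspace M \<and>
      (\<forall>c1\<in>A. \<forall>c2\<in>A.
          smooth_on (overlap c1 c2) (transition c1 c2) \<and>
          (\<forall>x\<in>overlap c1 c2. det (matrix (frechet_derivative (transition c1 c2) (at x))) > 0)))"

definition smooth_immersion :: "((real^2 \<Rightarrow> 'm) \<times> (real^2) set) set \<Rightarrow> ('m \<Rightarrow> real^4) \<Rightarrow> bool" where
  "smooth_immersion A \<alpha> =
     (\<forall>(\<psi>, U)\<in>A. smooth_on U (\<alpha> \<circ> \<psi>) \<and>
        (\<forall>x\<in>U. inj (frechet_derivative (\<alpha> \<circ> \<psi>) (at x))))"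

definition unit_normal_field :: "((real^2 \<Rightarrow> 'm) \<times> (real^2) set) set \<Rightarrow> ('m \<Rightarrow> real^4) \<Rightarrow> ('m \<Rightarrow> real^4) \<Rightarrow> bool" where
  "unit_normal_field A \<alpha> \<nu> =
     (\<forall>(\<psi>, U)\<in>A. smooth_on U (\<nu> \<circ> \<psi>) \<and>
        (\<forall>x\<in>U. norm (\<nu> (\<psi> x)) = 1 \<and>
           (\<forall>i. pd (\<alpha> \<circ> \<psi>) i x \<bullet> \<nu> (\<psi> x) = 0)))"

definition fE :: "(real^2 \<Rightarrow> real^4) \<Rightarrow> real^2 \<Rightarrow> real" where
  "fE a x = pd a 1 x \<bullet> pd a 1 x"
definition fF :: "(real^2 \<Rightarrow> real^4) \<Rightarrow> real^2 \<Rightarrow> real" where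
  "fF a x = pd a 1 x \<bullet> pd a 2 x"
definition fG :: "(real^2 \<Rightarrow> real^4) \<Rightarrow> real^2 \<Rightarrow> real" where
  "fG a x = pd a 2 x \<bullet> pd a 2 x"

definition se :: "(real^2 \<Rightarrow> real^4) \<Rightarrow> real^4 \<Rightarrow> real^2 \<Rightarrow> real" where
  "se a n x = pd (pd a 1) 1 x \<bullet> n"
definition sf :: "(real^2 \<Rightarrow> real^4) \<Rightarrow> real^4 \<Rightarrow> real^2 \<Rightarrow> real" where
  "sf a n x = pd (pd a 1) 2 x \<bullet> n"
definition sg :: "(real^2 \<Rightarrow> real^4) \<Rightarrow> real^4 \<Rightarrow> real^2 \<Rightarrow> real" where
  "sg a n x = pd (pd a 2) 2 x \<bullet> n"

definition normal_frame :: "(real^2 \<Rightarrow> real^4) \<Rightarrow> real^2 \<Rightarrow> real^4 \<Rightarrow> real^4 \<Rightarrow> bool" where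
  "normal_frame a x n1 n2 =
     (norm n1 = 1 \<and> norm n2 = 1 \<and> n1 \<bullet> n2 = 0 \<and>
      (\<forall>i. pd a i x \<bullet> n1 = 0 \<and> pd a i x \<bullet> n2 = 0))"

text \<open>Gaussian curvature in a chart, computed from an orthonormal normal frame
  (independent of the frame and of the chart).\<close>
definition gauss_K :: "(real^2 \<Rightarrow> real^4) \<Rightarrow> real^4 \<Rightarrow> real^4 \<Rightarrow> real^2 \<Rightarrow> real" where
  "gauss_K a n1 n2 x =
     (se a n1 x * sg a n1 x - (sf a n1 x)^2 + se a n2 x * sg a n2 x - (sf a n2 x)^2)
     / (fE a x * fG a x - (fF a x)^2)"

end

theory Submission
  imports Defs
begin


lemma orth4_zero:
  fixes r e1 e2 e3 e4 :: "real^4"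
  assumes n: "e1 \<bullet> e1 = 1" "e2 \<bullet> e2 = 1" "e3 \<bullet> e3 = 1" "e4 \<bullet> e4 = 1"
    and o: "e1 \<bullet> e2 = 0" "e1 \<bullet> e3 = 0" "e1 \<bullet> e4 = 0" "e2 \<bullet> e3 = 0" "e2 \<bullet> e4 = 0" "e3 \<bullet> e4 = 0"
    and r: "r \<bullet> e1 = 0" "r \<bullet> e2 = 0" "r \<bullet> e3 = 0" "r \<bullet> e4 = 0"
  shows "r = 0"
proof -
  define B where "B = {e1, e2, e3, e4}"
  have d: "e1 \<noteq> e2" "e1 \<noteq> e3" "e1 \<noteq> e4" "e2 \<noteq> e3" "e2 \<noteq> e4" "e3 \<noteq> e4"
    using n o by auto
  have po: "pairwise orthogonal B"
    unfolding B_def pairwise_def orthogonal_def using o by (auto simp: inner_commute)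
  have z: "0 \<notin> B" unfolding B_def using n by auto
  have ind: "independent B" using pairwise_orthogonal_independent[OF po z] .
  have c: "card B = 4" unfolding B_def using d by auto
  have "dim (UNIV :: (real^4) set) \<le> card B" by (simp add: c)
  then have "UNIV \<subseteq> span B" using card_ge_dim_independent[OF _ ind] by blast
  then have "r \<in> span B" by blast
  moreover have "\<And>y. y \<in> B \<Longrightarrow> orthogonal r y" unfolding B_def orthogonal_def using r by auto
  ultimately have "orthogonal r r" using orthogonal_to_span by blast
  then show ?thesis by (simp add: orthogonal_def)
qed

lemma dim_zero:
  fixes r au av nn xi :: "real^4"
  assumes ind: "\<forall>s t. s *\<^sub>R au + t *\<^sub>R av = 0 \<longrightarrow> s = 0 \<and> t = 0"
    and n: "nn \<bullet> nn = 1" "xi \<bullet> xi = 1" "nn \<bullet> xi = 0"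
    and o: "au \<bullet> nn = 0" "av \<bullet> nn = 0" "au \<bullet> xi = 0" "av \<bullet> xi = 0"
    and r: "r \<bullet> au = 0" "r \<bullet> av = 0" "r \<bullet> nn = 0" "r \<bullet> xi = 0"
  shows "r = 0"
proof -
  have au0: "au \<noteq> 0" using ind[rule_format, of 1 0] by auto
  define e1 where "e1 = (1 / norm au) *\<^sub>R au"
  have e1n: "e1 \<bullet> e1 = 1" using au0 unfolding e1_def
    by (simp add: power2_norm_eq_inner[symmetric] field_simps power2_eq_square)
  define q where "q = av - (av \<bullet> e1) *\<^sub>R e1"
  have "q = (- (av \<bullet> e1) / norm au) *\<^sub>R au + 1 *\<^sub>R av" unfolding q_def e1_def
    by (simp add: algebra_simps)
  then have q0: "q \<noteq> 0" using ind[rule_format, of "- (av \<bullet> e1) / norm au" 1] by auto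
  define e2 where "e2 = (1 / norm q) *\<^sub>R q"
  have e2n: "e2 \<bullet> e2 = 1" using q0 unfolding e2_def
    by (simp add: power2_norm_eq_inner[symmetric] field_simps power2_eq_square)
  have qe1: "q \<bullet> e1 = 0" unfolding q_def using e1n by (simp add: algebra_simps inner_commute)
  have e12: "e1 \<bullet> e2 = 0" unfolding e2_def using qe1 by (simp add: inner_commute)
  have e1nn: "e1 \<bullet> nn = 0" "e1 \<bullet> xi = 0" unfolding e1_def using o by auto
  have qnn: "q \<bullet> nn = 0" "q \<bullet> xi = 0" unfolding q_def using o e1nn by (auto simp: algebra_simps)
  have e2nn: "e2 \<bullet> nn = 0" "e2 \<bullet> xi = 0" unfolding e2_def using qnn by auto
  have re1: "r \<bullet> e1 = 0" unfolding e1_def using r by auto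
  have rq: "r \<bullet> q = 0" unfolding q_def using r re1 by (simp add: algebra_simps)
  have re2: "r \<bullet> e2 = 0" unfolding e2_def using rq by auto
  show ?thesis
    by (rule orth4_zero[OF e1n e2n n(1) n(2) e12 e1nn e2nn n(3) re1 re2 r(3) r(4)])
qed



lemma pointwise:
  fixes au av a11 a12 a22 nn W1 W2 :: "real^4" and lam :: real
  assumes ind: "\<forall>s t. s *\<^sub>R au + t *\<^sub>R av = 0 \<longrightarrow> s = 0 \<and> t = 0"
    and n: "nn \<bullet> nn = 1" and o: "au \<bullet> nn = 0" "av \<bullet> nn = 0"
    and w1: "W1 \<bullet> au = 0" "W1 \<bullet> av = 0" "W1 \<bullet> nn = 0"
    and w2: "W2 \<bullet> au = 0" "W2 \<bullet> av = 0" "W2 \<bullet> nn = 0"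
    and s1: "W1 \<bullet> a22 = W2 \<bullet> a12" and s2: "W1 \<bullet> a12 = W2 \<bullet> a11"
    and u: "a11 \<bullet> nn = lam * (au \<bullet> au)" "a12 \<bullet> nn = lam * (au \<bullet> av)" "a22 \<bullet> nn = lam * (av \<bullet> av)"
    and nz: "W1 \<noteq> 0 \<or> W2 \<noteq> 0"
  shows "\<exists>xi. xi \<bullet> xi = 1 \<and> nn \<bullet> xi = 0 \<and> au \<bullet> xi = 0 \<and> av \<bullet> xi = 0 \<and>
     ((a11 \<bullet> nn) * (a22 \<bullet> nn) - (a12 \<bullet> nn)^2 + (a11 \<bullet> xi) * (a22 \<bullet> xi) - (a12 \<bullet> xi)^2)
       / ((au \<bullet> au) * (av \<bullet> av) - (au \<bullet> av)^2) = lam^2"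
proof -
  define W where "W = (if W1 \<noteq> 0 then W1 else W2)"
  have W0: "W \<noteq> 0" using nz W_def by auto
  have wo: "W \<bullet> au = 0" "W \<bullet> av = 0" "W \<bullet> nn = 0" using w1 w2 W_def by auto
  define xi where "xi = (1 / norm W) *\<^sub>R W"
  have xin: "xi \<bullet> xi = 1" using W0 unfolding xi_def
    by (simp add: power2_norm_eq_inner[symmetric] field_simps power2_eq_square)
  have xo: "nn \<bullet> xi = 0" "au \<bullet> xi = 0" "av \<bullet> xi = 0" unfolding xi_def using wo
    by (auto simp: inner_commute)
  have rep: "Z = (Z \<bullet> xi) *\<^sub>R xi" if "Z \<bullet> au = 0" "Z \<bullet> av = 0" "Z \<bullet> nn = 0" for Z
  proof -
    have "Z - (Z \<bullet> xi) *\<^sub>R xi = 0"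
      apply (rule dim_zero[OF ind n xin xo(1) o xo(2) xo(3)])
      using that xo xin by (auto simp: algebra_simps inner_commute)
    then show ?thesis by simp
  qed
  define m1 where "m1 = W1 \<bullet> xi"
  define m2 where "m2 = W2 \<bullet> xi"
  have r1: "W1 = m1 *\<^sub>R xi" using rep[OF w1] m1_def by simp
  have r2: "W2 = m2 *\<^sub>R xi" using rep[OF w2] m2_def by simp
  have mnz: "m1 \<noteq> 0 \<or> m2 \<noteq> 0" using nz r1 r2 by auto
  define e where "e = a11 \<bullet> xi"
  define f where "f = a12 \<bullet> xi"
  define g where "g = a22 \<bullet> xi"
  have q1: "m1 * g = m2 * f" using s1 unfolding r1 r2 f_def g_def by (simp add: inner_commute)
  have q2: "m1 * f = m2 * e" using s2 unfolding r1 r2 f_def e_def by (simp add: inner_commute)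
  have eg: "e * g - f^2 = 0"
  proof (cases "m1 = 0")
    case True
    then have "m2 \<noteq> 0" using mnz by auto
    have "m2 * (e * g - f^2) = (m2 * e) * g - (m2 * f) * f" by (simp add: algebra_simps power2_eq_square)
    also have "\<dots> = (m1 * f) * g - (m1 * g) * f" using q1 q2 by simp
    also have "\<dots> = 0" by simp
    finally have "m2 * (e * g - f^2) = 0" .
    then show ?thesis using \<open>m2 \<noteq> 0\<close> by simp
  next
    case False
    have "m1 * (e * g - f^2) = e * (m1 * g) - f * (m1 * f)" by (simp add: algebra_simps power2_eq_square)
    also have "\<dots> = e * (m2 * f) - f * (m2 * e)" using q1 q2 by simp
    also have "\<dots> = 0" by simp
    finally have "m1 * (e * g - f^2) = 0" .
    then show ?thesis using False by simp
  qed
  define E where "E = au \<bullet> au"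
  define F where "F = au \<bullet> av"
  define G where "G = av \<bullet> av"
  have av0: "av \<noteq> 0" using ind[rule_format, of 0 1] by auto
  have G0: "G > 0" using av0 G_def by simp
  have "(G *\<^sub>R au - F *\<^sub>R av) \<bullet> (G *\<^sub>R au - F *\<^sub>R av) = G * (E * G - F^2)"
    unfolding E_def F_def G_def by (simp add: algebra_simps inner_commute power2_eq_square)
  moreover have "G *\<^sub>R au - F *\<^sub>R av \<noteq> 0"
    using ind[rule_format, of G "-F"] G0 by auto
  ultimately have D: "E * G - F^2 \<noteq> 0" using G0 by auto
  show ?thesis
  proof (intro exI conjI)
    show "((a11 \<bullet> nn) * (a22 \<bullet> nn) - (a12 \<bullet> nn)^2 + (a11 \<bullet> xi) * (a22 \<bullet> xi) - (a12 \<bullet> xi)^2)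
       / ((au \<bullet> au) * (av \<bullet> av) - (au \<bullet> av)^2) = lam^2"
    proof -
      have "(lam * E * (lam * G) - (lam * F)^2 + (e * g - f^2)) / (E * G - F^2) = lam^2"
        using D eg by (simp add: power2_eq_square divide_simps) (simp add: algebra_simps)
      then show ?thesis unfolding u e_def f_def g_def E_def F_def G_def by (simp add: algebra_simps)
    qed
  qed (use xin xo in auto)
qed



lemma pd_cong:
  assumes "open U" "x \<in> U" "\<forall>y\<in>U. f y = g y"
  shows "pd f i x = pd g i x"
proof -
  have "\<And>D. (f has_derivative D) (at x) \<longleftrightarrow> (g has_derivative D) (at x)"
    using has_derivative_transform_within_open[OF _ assms(1,2), of f _ UNIV g]
      has_derivative_transform_within_open[OF _ assms(1,2), of g _ UNIV f] assms(3)
    by auto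
  then show ?thesis unfolding pd_def frechet_derivative_def by simp
qed

lemma pd_has:
  assumes "f differentiable (at x)"
  shows "(f has_derivative frechet_derivative f (at x)) (at x)"
  using assms frechet_derivative_works by blast

lemma pd_const: "pd (\<lambda>y. c) i x = 0"
proof -
  have "((\<lambda>y. c) has_derivative (\<lambda>h. 0)) (at x)" by (rule has_derivative_const)
  then have "(\<lambda>h. 0) = frechet_derivative (\<lambda>y. c) (at x)" by (rule frechet_derivative_at)
  then show ?thesis unfolding pd_def by (simp add: fun_eq_iff)
qed

lemma pd_zero:
  assumes "open U" "x \<in> U" "\<forall>y\<in>U. f y = c"
  shows "pd f i x = 0"
  using pd_cong[OF assms(1,2), of f "\<lambda>y. c"] assms(3) pd_const by simp

lemma pd_inner:
  fixes f g :: "real^2 \<Rightarrow> 'a::real_inner"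
  assumes "f differentiable (at x)" "g differentiable (at x)"
  shows "pd (\<lambda>y. f y \<bullet> g y) i x = pd f i x \<bullet> g x + f x \<bullet> pd g i x"
proof -
  have d: "((\<lambda>y. f y \<bullet> g y) has_derivative
     (\<lambda>h. f x \<bullet> frechet_derivative g (at x) h + frechet_derivative f (at x) h \<bullet> g x)) (at x)"
    by (rule has_derivative_inner[OF pd_has[OF assms(1)] pd_has[OF assms(2)]])
  have eq: "frechet_derivative (\<lambda>y. f y \<bullet> g y) (at x) =
     (\<lambda>h. f x \<bullet> frechet_derivative g (at x) h + frechet_derivative f (at x) h \<bullet> g x)"
    using frechet_derivative_at[OF d] by (rule sym)
  show ?thesis unfolding pd_def eq by (simp add: add.commute)
qed

lemma pd_lin:
  fixes f g :: "real^2 \<Rightarrow> 'a::real_normed_vector"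
  assumes "f differentiable (at x)" "g differentiable (at x)"
  shows "pd (\<lambda>y. f y + c *\<^sub>R g y) i x = pd f i x + c *\<^sub>R pd g i x"
proof -
  have d: "((\<lambda>y. f y + c *\<^sub>R g y) has_derivative
     (\<lambda>h. frechet_derivative f (at x) h + c *\<^sub>R frechet_derivative g (at x) h)) (at x)"
    by (intro has_derivative_add has_derivative_scaleR_right pd_has assms)
  have eq: "frechet_derivative (\<lambda>y. f y + c *\<^sub>R g y) (at x) =
     (\<lambda>h. frechet_derivative f (at x) h + c *\<^sub>R frechet_derivative g (at x) h)"
    using frechet_derivative_at[OF d] by (rule sym)
  show ?thesis unfolding pd_def eq by simp
qed

lemma diff_lin:
  fixes f g :: "real^2 \<Rightarrow> 'a::real_normed_vector"
  assumes "f differentiable (at x)" "g differentiable (at x)"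
  shows "(\<lambda>y. f y + c *\<^sub>R g y) differentiable (at x)"
  unfolding differentiable_def
  using has_derivative_add[OF pd_has[OF assms(1)] has_derivative_scaleR_right[OF pd_has[OF assms(2)]]] by blast

lemma smooth_diff: "smooth_on U f \<Longrightarrow> x \<in> U \<Longrightarrow> f differentiable (at x)"
  unfolding smooth_on_def proof -
  assume "\<forall>k. Ck_on k U f" "x \<in> U"
  then have "Ck_on (Suc 0) U f" by blast
  then show ?thesis using \<open>x \<in> U\<close> by simp
qed

lemma smooth_pd: "smooth_on U f \<Longrightarrow> smooth_on U (pd f i)"
  unfolding smooth_on_def proof
  fix k assume "\<forall>k. Ck_on k U f"
  then have "Ck_on (Suc k) U f" by blast
  then show "Ck_on k U (pd f i)" by simp
qed

lemma smooth_cont: "smooth_on U f \<Longrightarrow> continuous_on U f"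
  unfolding smooth_on_def using Ck_on.simps(1) by blast

lemma line_deriv:
  fixes g :: "real^2 \<Rightarrow> real"
  assumes "g differentiable (at (y + s *\<^sub>R axis i 1))"
  shows "((\<lambda>s. g (y + s *\<^sub>R axis i 1)) has_real_derivative pd g i (y + s *\<^sub>R axis i 1)) (at s)"
proof -
  let ?D = "frechet_derivative g (at (y + s *\<^sub>R axis i 1))"
  have lin: "linear ?D" using pd_has[OF assms] has_derivative_linear by blast
  have l: "((\<lambda>s. y + s *\<^sub>R axis i 1) has_derivative (\<lambda>h. h *\<^sub>R axis i 1)) (at s)"
    by (auto intro!: derivative_eq_intros)
  have "((\<lambda>s. g (y + s *\<^sub>R axis i 1)) has_derivative (\<lambda>h. ?D (h *\<^sub>R axis i 1))) (at s)"
    using has_derivative_compose[OF l pd_has[OF assms]] by (simp add: o_def)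
  moreover have "(\<lambda>h. ?D (h *\<^sub>R axis i 1)) = (\<lambda>h. pd g i (y + s *\<^sub>R axis i 1) * h)"
    using lin unfolding pd_def by (auto simp: linear_scale mult.commute)
  ultimately show ?thesis by (simp add: has_field_derivative_def)
qed

lemma zero_deriv:
  fixes f :: "real^2 \<Rightarrow> 'a::real_normed_vector"
  assumes "f differentiable (at x)" "pd f 1 x = 0" "pd f 2 x = 0"
  shows "(f has_derivative (\<lambda>h. 0)) (at x)"
proof -
  let ?D = "frechet_derivative f (at x)"
  have lin: "linear ?D" using pd_has[OF assms(1)] has_derivative_linear by blast
  have "?D h = 0" for h
  proof -
    have hrep: "(h $ 1) *\<^sub>R axis 1 1 + (h $ 2) *\<^sub>R axis 2 1 = h"
      by (simp add: vec_eq_iff axis_def forall_2)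
    have "?D ((h $ 1) *\<^sub>R axis 1 1 + (h $ 2) *\<^sub>R axis 2 1)
        = (h $ 1) *\<^sub>R ?D (axis 1 1) + (h $ 2) *\<^sub>R ?D (axis 2 1)"
      by (simp add: linear_add[OF lin] linear_scale[OF lin])
    then have "?D h = (h $ 1) *\<^sub>R ?D (axis 1 1) + (h $ 2) *\<^sub>R ?D (axis 2 1)"
      unfolding hrep .
    then show ?thesis using assms(2,3) unfolding pd_def by simp
  qed
  then have "?D = (\<lambda>h. 0)" by auto
  then show ?thesis using pd_has[OF assms(1)] by simp
qed



lemma line_deriv_v:
  fixes f :: "real^2 \<Rightarrow> real^4"
  assumes "f differentiable (at (b + s *\<^sub>R axis i 1))"
  shows "((\<lambda>s. f (b + s *\<^sub>R axis i 1) \<bullet> v) has_real_derivative (pd f i (b + s *\<^sub>R axis i 1) \<bullet> v)) (at s)"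
proof -
  let ?D = "frechet_derivative f (at (b + s *\<^sub>R axis i 1))"
  have lin: "linear ?D" using pd_has[OF assms] has_derivative_linear by blast
  have l: "((\<lambda>s. b + s *\<^sub>R axis i 1) has_derivative (\<lambda>h. h *\<^sub>R axis i 1)) (at s)"
    by (auto intro!: derivative_eq_intros)
  have c: "((\<lambda>s. f (b + s *\<^sub>R axis i 1)) has_derivative (\<lambda>h. ?D (h *\<^sub>R axis i 1))) (at s)"
    using has_derivative_compose[OF l pd_has[OF assms]] by (simp add: o_def)
  have d: "((\<lambda>s. f (b + s *\<^sub>R axis i 1) \<bullet> v) has_derivative
      (\<lambda>h. f (b + s *\<^sub>R axis i 1) \<bullet> 0 + ?D (h *\<^sub>R axis i 1) \<bullet> v)) (at s)"
    by (rule has_derivative_inner[OF c has_derivative_const])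
  have "(\<lambda>h. f (b + s *\<^sub>R axis i 1) \<bullet> 0 + ?D (h *\<^sub>R axis i 1) \<bullet> v)
        = (*) (pd f i (b + s *\<^sub>R axis i 1) \<bullet> v)"
    using lin unfolding pd_def by (auto simp: linear_scale fun_eq_iff mult.commute)
  then show ?thesis using d by (simp add: has_field_derivative_def)
qed

lemma norm_axis_comb:
  "norm (s *\<^sub>R axis i (1::real) + t *\<^sub>R axis j 1 :: real^2) \<le> \<bar>s\<bar> + \<bar>t\<bar>"
proof -
  have "norm (s *\<^sub>R axis i (1::real) + t *\<^sub>R axis j 1 :: real^2) \<le> norm (s *\<^sub>R axis i (1::real) :: real^2) + norm (t *\<^sub>R axis j (1::real) :: real^2)"
    by (rule norm_triangle_ineq)
  then show ?thesis by simp
qed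

lemma mixed_mvt:
  fixes g G H :: "real^2 \<Rightarrow> real"
  assumes dG: "\<forall>b s. b + s *\<^sub>R axis i 1 \<in> ball y r \<longrightarrow>
        ((\<lambda>s. g (b + s *\<^sub>R axis i 1)) has_real_derivative G (b + s *\<^sub>R axis i 1)) (at s)"
    and dH: "\<forall>b t. b + t *\<^sub>R axis j 1 \<in> ball y r \<longrightarrow>
        ((\<lambda>t. G (b + t *\<^sub>R axis j 1)) has_real_derivative H (b + t *\<^sub>R axis j 1)) (at t)"
    and h: "0 < h" "2 * h < r"
  shows "\<exists>p. norm (p - y) \<le> 2 * h \<and>
     g (y + h *\<^sub>R axis i 1 + h *\<^sub>R axis j 1) - g (y + h *\<^sub>R axis i 1) - g (y + h *\<^sub>R axis j 1) + g y
       = h^2 * H p"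
proof -
  let ?ei = "axis i (1::real) :: real^2"
  let ?ej = "axis j (1::real) :: real^2"
  have inb: "y + s *\<^sub>R ?ei + t *\<^sub>R ?ej \<in> ball y r" if "\<bar>s\<bar> \<le> h" "\<bar>t\<bar> \<le> h" for s t
  proof -
    have "norm (s *\<^sub>R ?ei + t *\<^sub>R ?ej) \<le> \<bar>s\<bar> + \<bar>t\<bar>" by (rule norm_axis_comb)
    then have "norm (s *\<^sub>R ?ei + t *\<^sub>R ?ej) < r" using that h by linarith
    moreover have "dist y (y + s *\<^sub>R ?ei + t *\<^sub>R ?ej) = dist 0 (s *\<^sub>R ?ei + t *\<^sub>R ?ej)"
      using dist_add_cancel[of y 0 "s *\<^sub>R ?ei + t *\<^sub>R ?ej"] by (simp add: add.assoc)
    ultimately show ?thesis by (simp only: mem_ball dist_0_norm)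
  qed
  define \<phi> where "\<phi> s = g ((y + h *\<^sub>R ?ej) + s *\<^sub>R ?ei) - g (y + s *\<^sub>R ?ei)" for s
  have "DERIV \<phi> s :> G ((y + h *\<^sub>R ?ej) + s *\<^sub>R ?ei) - G (y + s *\<^sub>R ?ei)" if "0 \<le> s" "s \<le> h" for s
  proof -
    have m1: "(y + h *\<^sub>R ?ej) + s *\<^sub>R ?ei \<in> ball y r"
      using inb[of s h] that h by (simp add: algebra_simps)
    have m2: "y + s *\<^sub>R ?ei \<in> ball y r"
      using inb[of s 0] that h by simp
    show ?thesis unfolding \<phi>_def
      by (rule DERIV_diff) (use dG m1 m2 in blast)+
  qed
  from MVT2[OF h(1) this] obtain \<tau> where tau: "0 < \<tau>" "\<tau> < h"
    and e1: "\<phi> h - \<phi> 0 = (h - 0) * (G ((y + h *\<^sub>R ?ej) + \<tau> *\<^sub>R ?ei) - G (y + \<tau> *\<^sub>R ?ei))"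
    by blast
  define \<psi> where "\<psi> t = G ((y + \<tau> *\<^sub>R ?ei) + t *\<^sub>R ?ej)" for t
  have "DERIV \<psi> t :> H ((y + \<tau> *\<^sub>R ?ei) + t *\<^sub>R ?ej)" if "0 \<le> t" "t \<le> h" for t
  proof -
    have m: "(y + \<tau> *\<^sub>R ?ei) + t *\<^sub>R ?ej \<in> ball y r"
      using inb[of \<tau> t] that tau by simp
    show ?thesis unfolding \<psi>_def using dH m by blast
  qed
  from MVT2[OF h(1) this] obtain \<sigma> where sig: "0 < \<sigma>" "\<sigma> < h"
    and e2: "\<psi> h - \<psi> 0 = (h - 0) * H ((y + \<tau> *\<^sub>R ?ei) + \<sigma> *\<^sub>R ?ej)"
    by blast
  have "norm ((y + \<tau> *\<^sub>R ?ei + \<sigma> *\<^sub>R ?ej) - y) \<le> \<bar>\<tau>\<bar> + \<bar>\<sigma>\<bar>"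
    using norm_axis_comb[of \<tau> i \<sigma> j] by (simp add: add.assoc)
  then have pn: "norm ((y + \<tau> *\<^sub>R ?ei + \<sigma> *\<^sub>R ?ej) - y) \<le> 2 * h" using tau sig by linarith
  have "G ((y + h *\<^sub>R ?ej) + \<tau> *\<^sub>R ?ei) = \<psi> h" unfolding \<psi>_def by (simp add: add_ac)
  moreover have "G (y + \<tau> *\<^sub>R ?ei) = \<psi> 0" unfolding \<psi>_def by simp
  ultimately have "\<phi> h - \<phi> 0 = h * (h * H (y + \<tau> *\<^sub>R ?ei + \<sigma> *\<^sub>R ?ej))"
    using e1 e2 by simp
  moreover have "\<phi> h - \<phi> 0 = g (y + h *\<^sub>R ?ei + h *\<^sub>R ?ej) - g (y + h *\<^sub>R ?ei) - g (y + h *\<^sub>R ?ej) + g y"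
    unfolding \<phi>_def by (simp add: add_ac)
  ultimately show ?thesis using pn by (intro exI[of _ "y + \<tau> *\<^sub>R ?ei + \<sigma> *\<^sub>R ?ej"])
      (simp add: power2_eq_square)
qed

lemma lim_eq:
  fixes A B :: "real^2 \<Rightarrow> real"
  assumes "isCont A y" "isCont B y" "rr > 0"
    and ex: "\<forall>h. 0 < h \<and> h < rr \<longrightarrow> (\<exists>p q. norm (p - y) \<le> 2 * h \<and> norm (q - y) \<le> 2 * h \<and> A p = B q)"
  shows "A y = B y"
proof (rule ccontr)
  assume ne: "A y \<noteq> B y"
  define d where "d = \<bar>A y - B y\<bar>"
  have d0: "d / 2 > 0" using ne d_def by simp
  obtain d1 where d1: "d1 > 0" "\<forall>x'. dist x' y < d1 \<longrightarrow> dist (A x') (A y) < d / 2"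
    using assms(1) d0 unfolding continuous_at_eps_delta by blast
  obtain d2 where d2: "d2 > 0" "\<forall>x'. dist x' y < d2 \<longrightarrow> dist (B x') (B y) < d / 2"
    using assms(2) d0 unfolding continuous_at_eps_delta by blast
  define h where "h = min (min d1 d2) rr / 4"
  have h: "0 < h" "h < rr" "2 * h < d1" "2 * h < d2" using d1 d2 assms(3) unfolding h_def by auto
  then obtain p q where pq: "norm (p - y) \<le> 2 * h" "norm (q - y) \<le> 2 * h" "A p = B q"
    using ex by blast
  have "dist p y < d1" "dist q y < d2" using pq h by (auto simp: dist_norm)
  then have "\<bar>A p - A y\<bar> < d / 2" "\<bar>B q - B y\<bar> < d / 2" using d1 d2 by (auto simp: dist_real_def)
  then show False using pq(3) d_def by linarith
qed

lemma clairaut: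
  fixes f :: "real^2 \<Rightarrow> real^4"
  assumes U: "open U" "y \<in> U" and sm: "smooth_on U f"
  shows "pd (pd f 1) 2 y = pd (pd f 2) 1 y"
proof -
  obtain r where r: "r > 0" "ball y r \<subseteq> U" using U open_contains_ball by blast
  have key: "pd (pd f 1) 2 y \<bullet> v = pd (pd f 2) 1 y \<bullet> v" for v
  proof -
    have inst: "\<exists>p. norm (p - y) \<le> 2 * h \<and>
       f (y + h *\<^sub>R axis i 1 + h *\<^sub>R axis j 1) \<bullet> v - f (y + h *\<^sub>R axis i 1) \<bullet> v
         - f (y + h *\<^sub>R axis j 1) \<bullet> v + f y \<bullet> v = h^2 * (pd (pd f i) j p \<bullet> v)"
      if "0 < h" "2 * h < r" for h i j
    proof (rule mixed_mvt[where g = "\<lambda>z. f z \<bullet> v" and G = "\<lambda>z. pd f i z \<bullet> v"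
          and H = "\<lambda>z. pd (pd f i) j z \<bullet> v", OF _ _ that])
      show "\<forall>b s. b + s *\<^sub>R axis i 1 \<in> ball y r \<longrightarrow>
        ((\<lambda>s. f (b + s *\<^sub>R axis i 1) \<bullet> v) has_real_derivative pd f i (b + s *\<^sub>R axis i 1) \<bullet> v) (at s)"
        using r smooth_diff[OF sm] by (auto intro!: line_deriv_v)
      show "\<forall>b t. b + t *\<^sub>R axis j 1 \<in> ball y r \<longrightarrow>
        ((\<lambda>t. pd f i (b + t *\<^sub>R axis j 1) \<bullet> v) has_real_derivative pd (pd f i) j (b + t *\<^sub>R axis j 1) \<bullet> v) (at t)"
        using r smooth_diff[OF smooth_pd[OF sm]] by (auto intro!: line_deriv_v)
    qed
    have cont: "isCont (\<lambda>z. pd (pd f i) j z \<bullet> v) y" for i j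
    proof -
      have "continuous_on U (pd (pd f i) j)" using smooth_cont[OF smooth_pd[OF smooth_pd[OF sm]]] .
      then have "isCont (pd (pd f i) j) y" using continuous_on_eq_continuous_at U by blast
      then show ?thesis by simp
    qed
    show ?thesis
    proof (rule lim_eq[where A = "\<lambda>z. pd (pd f 1) 2 z \<bullet> v" and B = "\<lambda>z. pd (pd f 2) 1 z \<bullet> v" and rr = "r / 2",
          OF cont cont])
      show "r / 2 > 0" using r by simp
      show "\<forall>h. 0 < h \<and> h < r / 2 \<longrightarrow> (\<exists>p q. norm (p - y) \<le> 2 * h \<and> norm (q - y) \<le> 2 * h \<and>
             pd (pd f 1) 2 p \<bullet> v = pd (pd f 2) 1 q \<bullet> v)"
      proof (intro allI impI)
        fix h :: real assume hh: "0 < h \<and> h < r / 2"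
        then have h: "0 < h" "2 * h < r" by auto
        obtain p where p: "norm (p - y) \<le> 2 * h"
          "f (y + h *\<^sub>R axis 1 1 + h *\<^sub>R axis 2 1) \<bullet> v - f (y + h *\<^sub>R axis 1 1) \<bullet> v
         - f (y + h *\<^sub>R axis 2 1) \<bullet> v + f y \<bullet> v = h^2 * (pd (pd f 1) 2 p \<bullet> v)"
          using inst[OF h, of 1 2] by blast
        obtain q where q: "norm (q - y) \<le> 2 * h"
          "f (y + h *\<^sub>R axis 2 1 + h *\<^sub>R axis 1 1) \<bullet> v - f (y + h *\<^sub>R axis 2 1) \<bullet> v
         - f (y + h *\<^sub>R axis 1 1) \<bullet> v + f y \<bullet> v = h^2 * (pd (pd f 2) 1 q \<bullet> v)"
          using inst[OF h, of 2 1] by blast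
        have "h^2 * (pd (pd f 1) 2 p \<bullet> v) = h^2 * (pd (pd f 2) 1 q \<bullet> v)"
        proof -
          have sw: "y + h *\<^sub>R axis 2 1 + h *\<^sub>R axis 1 1 = y + h *\<^sub>R axis 1 1 + h *\<^sub>R axis 2 (1::real)"
            by (simp add: add_ac)
          show ?thesis using p(2) q(2) unfolding sw by linarith
        qed
        then have "pd (pd f 1) 2 p \<bullet> v = pd (pd f 2) 1 q \<bullet> v" using h by simp
        then show "\<exists>p q. norm (p - y) \<le> 2 * h \<and> norm (q - y) \<le> 2 * h \<and>
             pd (pd f 1) 2 p \<bullet> v = pd (pd f 2) 1 q \<bullet> v" using p(1) q(1) by blast
      qed
    qed
  qed
  have "(pd (pd f 1) 2 y - pd (pd f 2) 1 y) \<bullet> (pd (pd f 1) 2 y - pd (pd f 2) 1 y) = 0"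
    using key by (simp add: inner_diff_left)
  then show ?thesis by simp
qed



lemma indep_from_inj:
  fixes a :: "real^2 \<Rightarrow> real^4"
  assumes d: "a differentiable (at x)" and inj: "inj (frechet_derivative a (at x))"
  shows "\<forall>s t. s *\<^sub>R pd a 1 x + t *\<^sub>R pd a 2 x = 0 \<longrightarrow> s = 0 \<and> t = 0"
proof (intro allI impI)
  fix s t assume h: "s *\<^sub>R pd a 1 x + t *\<^sub>R pd a 2 x = 0"
  let ?D = "frechet_derivative a (at x)"
  have lin: "linear ?D" using pd_has[OF d] has_derivative_linear by blast
  have "?D (s *\<^sub>R axis 1 1 + t *\<^sub>R axis 2 1) = ?D 0"
    using h unfolding pd_def by (simp add: linear_add[OF lin] linear_scale[OF lin] linear_0[OF lin])
  then have "s *\<^sub>R axis 1 1 + t *\<^sub>R axis 2 1 = (0 :: real^2)" using inj by (meson injD)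
  then have "(s *\<^sub>R axis 1 1 + t *\<^sub>R axis 2 1 :: real^2) $ 1 = 0"
        "(s *\<^sub>R axis 1 1 + t *\<^sub>R axis 2 1 :: real^2) $ 2 = 0" by auto
  then show "s = 0 \<and> t = 0" by (simp add: axis_def)
qed

lemma core:
  fixes a n :: "real^2 \<Rightarrow> real^4" and lam :: real
  assumes U: "open U" and sa: "smooth_on U a" and sn: "smooth_on U n"
    and inj: "\<forall>x\<in>U. inj (frechet_derivative a (at x))"
    and nn: "\<forall>x\<in>U. norm (n x) = 1 \<and> (\<forall>i. pd a i x \<bullet> n x = 0)"
    and umb: "\<forall>x\<in>U. se a (n x) x = lam * fE a x \<and> sf a (n x) x = lam * fF a x \<and> sg a (n x) x = lam * fG a x"
    and K: "\<forall>x\<in>U. \<forall>n1 n2. normal_frame a x n1 n2 \<longrightarrow> gauss_K a n1 n2 x \<noteq> lam^2"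
  shows "\<forall>x\<in>U. \<forall>i. pd n i x + lam *\<^sub>R pd a i x = 0"
proof -
  have da: "a differentiable (at y)" if "y \<in> U" for y using smooth_diff[OF sa that] .
  have dn: "n differentiable (at y)" if "y \<in> U" for y using smooth_diff[OF sn that] .
  have dai: "pd a i differentiable (at y)" if "y \<in> U" for y i using smooth_diff[OF smooth_pd[OF sa] that] .
  have dni: "pd n i differentiable (at y)" if "y \<in> U" for y i using smooth_diff[OF smooth_pd[OF sn] that] .
  have syma: "pd (pd a 2) 1 y = pd (pd a 1) 2 y" if "y \<in> U" for y
    using clairaut[OF U that sa] by simp
  have symn: "pd (pd n 2) 1 y = pd (pd n 1) 2 y" if "y \<in> U" for y
    using clairaut[OF U that sn] by simp
  have F1: "pd (pd a i) j y \<bullet> n y + pd a i y \<bullet> pd n j y = 0" if "y \<in> U" for y i j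
  proof -
    have "pd (\<lambda>z. pd a i z \<bullet> n z) j y = 0"
      by (rule pd_zero[OF U that, where c = 0]) (use nn in blast)
    then show ?thesis using pd_inner[OF dai[OF that] dn[OF that]] by simp
  qed
  have F2: "pd n j y \<bullet> n y = 0" if "y \<in> U" for y j
  proof -
    have "\<forall>z\<in>U. n z \<bullet> n z = 1" using nn by (simp add: norm_eq_1)
    then have "pd (\<lambda>z. n z \<bullet> n z) j y = 0" by (rule pd_zero[OF U that, where c = 1]) 
    then show ?thesis using pd_inner[OF dn[OF that] dn[OF that]] by (simp add: inner_commute)
  qed
  have UM: "pd (pd a i) j y \<bullet> n y = lam * (pd a i y \<bullet> pd a j y)" if "y \<in> U" for y i j
  proof -
    have u: "pd (pd a 1) 1 y \<bullet> n y = lam * (pd a 1 y \<bullet> pd a 1 y)"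
      "pd (pd a 1) 2 y \<bullet> n y = lam * (pd a 1 y \<bullet> pd a 2 y)"
      "pd (pd a 2) 2 y \<bullet> n y = lam * (pd a 2 y \<bullet> pd a 2 y)"
      using umb that unfolding se_def sf_def sg_def fE_def fF_def fG_def by auto
    show ?thesis using exhaust_2[of i] exhaust_2[of j] u syma[OF that]
      by (auto simp: inner_commute)
  qed
  have G: "(pd n j y + lam *\<^sub>R pd a j y) \<bullet> pd a i y = 0 \<and> (pd n j y + lam *\<^sub>R pd a j y) \<bullet> n y = 0"
    if "y \<in> U" for y i j
  proof
    show "(pd n j y + lam *\<^sub>R pd a j y) \<bullet> pd a i y = 0"
    proof -
      have "(pd n j y + lam *\<^sub>R pd a j y) \<bullet> pd a i y = pd a i y \<bullet> pd n j y + lam * (pd a i y \<bullet> pd a j y)"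
        by (simp add: inner_add_left inner_commute[of "pd n j y"] inner_commute[of "pd a j y"])
      then show ?thesis using F1[OF that, of i j] UM[OF that, of i j] by simp
    qed
    show "(pd n j y + lam *\<^sub>R pd a j y) \<bullet> n y = 0"
      using F2[OF that, of j] nn that by (simp add: inner_add_left)
  qed
  have H: "(pd (pd n j) k y + lam *\<^sub>R pd (pd a j) k y) \<bullet> pd a i y
      + (pd n j y + lam *\<^sub>R pd a j y) \<bullet> pd (pd a i) k y = 0" if "y \<in> U" for y i j k
  proof -
    have "pd (\<lambda>z. (pd n j z + lam *\<^sub>R pd a j z) \<bullet> pd a i z) k y = 0"
      by (rule pd_zero[OF U that, where c = 0]) (use G in blast)
    moreover have "pd (\<lambda>z. (pd n j z + lam *\<^sub>R pd a j z) \<bullet> pd a i z) k y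
      = pd (\<lambda>z. pd n j z + lam *\<^sub>R pd a j z) k y \<bullet> pd a i y + (pd n j y + lam *\<^sub>R pd a j y) \<bullet> pd (pd a i) k y"
      by (rule pd_inner[OF diff_lin[OF dni[OF that] dai[OF that]] dai[OF that]])
    moreover have "pd (\<lambda>z. pd n j z + lam *\<^sub>R pd a j z) k y = pd (pd n j) k y + lam *\<^sub>R pd (pd a j) k y"
      by (rule pd_lin[OF dni[OF that] dai[OF that]])
    ultimately show ?thesis by simp
  qed
  show ?thesis
  proof (intro ballI allI)
    fix y i assume y: "y \<in> U"
    define W1 where "W1 = pd n 1 y + lam *\<^sub>R pd a 1 y"
    define W2 where "W2 = pd n 2 y + lam *\<^sub>R pd a 2 y"
    have s1: "W1 \<bullet> pd (pd a 2) 2 y = W2 \<bullet> pd (pd a 1) 2 y"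
      using H[OF y, where i=2 and j=1 and k=2] H[OF y, where i=2 and j=2 and k=1] syma[OF y] symn[OF y] unfolding W1_def W2_def
      by (simp add: algebra_simps)
    have s2: "W1 \<bullet> pd (pd a 1) 2 y = W2 \<bullet> pd (pd a 1) 1 y"
      using H[OF y, where i=1 and j=1 and k=2] H[OF y, where i=1 and j=2 and k=1] syma[OF y] symn[OF y] unfolding W1_def W2_def
      by (simp add: algebra_simps)
    have W0: "W1 = 0 \<and> W2 = 0"
    proof (rule ccontr)
      assume nz: "\<not> (W1 = 0 \<and> W2 = 0)"
      have ind: "\<forall>s t. s *\<^sub>R pd a 1 y + t *\<^sub>R pd a 2 y = 0 \<longrightarrow> s = 0 \<and> t = 0"
        using indep_from_inj[OF da[OF y]] inj y by blast
      have n1: "n y \<bullet> n y = 1" using nn y by (simp add: norm_eq_1)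
      obtain xi where xi: "xi \<bullet> xi = 1" "n y \<bullet> xi = 0" "pd a 1 y \<bullet> xi = 0" "pd a 2 y \<bullet> xi = 0"
        "((pd (pd a 1) 1 y \<bullet> n y) * (pd (pd a 2) 2 y \<bullet> n y) - (pd (pd a 1) 2 y \<bullet> n y)^2
          + (pd (pd a 1) 1 y \<bullet> xi) * (pd (pd a 2) 2 y \<bullet> xi) - (pd (pd a 1) 2 y \<bullet> xi)^2)
         / ((pd a 1 y \<bullet> pd a 1 y) * (pd a 2 y \<bullet> pd a 2 y) - (pd a 1 y \<bullet> pd a 2 y)^2) = lam^2"
        using pointwise[OF ind n1 _ _ _ _ _ _ _ _ s1 s2 UM[OF y, of 1 1] UM[OF y, of 1 2] UM[OF y, of 2 2]]
          nz nn y G[OF y] unfolding W1_def W2_def by blast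
      have "normal_frame a y (n y) xi"
        unfolding normal_frame_def
      proof (intro conjI allI)
        show "norm (n y) = 1" using nn y by blast
        show "norm xi = 1" using xi(1) by (simp add: norm_eq_1)
        show "n y \<bullet> xi = 0" using xi(2) .
        fix i :: 2
        show "pd a i y \<bullet> n y = 0" using nn y by blast
        show "pd a i y \<bullet> xi = 0" using exhaust_2[of i] xi(3,4) by auto
      qed
      moreover have "gauss_K a (n y) xi y = lam^2"
        using xi(5) unfolding gauss_K_def se_def sf_def sg_def fE_def fF_def fG_def by simp
      ultimately show False using K y by blast
    qed
    show "pd n i y + lam *\<^sub>R pd a i y = 0"
      using exhaust_2[of i] W0 unfolding W1_def W2_def by auto
  qed
qed



lemma locconst:
  assumes conn: "connected_space M"
    and loc: "\<forall>p\<in>topspace M. \<exists>T. openin M T \<and> p \<in> T \<and> (\<forall>q\<in>T. f q = f p)"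
    and p0: "p0 \<in> topspace M"
  shows "\<forall>p\<in>topspace M. f p = f p0"
proof -
  define S where "S = {p\<in>topspace M. f p = f p0}"
  have o1: "openin M S"
  proof (rule openin_subopen[THEN iffD2], intro ballI)
    fix p assume pS: "p \<in> S"
    then have pt: "p \<in> topspace M" and fp: "f p = f p0" unfolding S_def by auto
    obtain T where T: "openin M T" "p \<in> T" "\<forall>q\<in>T. f q = f p" using loc pt by blast
    have "T \<subseteq> S" using openin_subset[OF T(1)] T(3) fp unfolding S_def by auto
    then show "\<exists>T. openin M T \<and> p \<in> T \<and> T \<subseteq> S" using T by blast
  qed
  have o2: "openin M (topspace M - S)"
  proof (rule openin_subopen[THEN iffD2], intro ballI)
    fix p assume pS: "p \<in> topspace M - S"
    then have pt: "p \<in> topspace M" and fp: "f p \<noteq> f p0" unfolding S_def by auto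
    obtain T where T: "openin M T" "p \<in> T" "\<forall>q\<in>T. f q = f p" using loc pt by blast
    have "T \<subseteq> topspace M - S" using openin_subset[OF T(1)] T(3) fp unfolding S_def by auto
    then show "\<exists>T. openin M T \<and> p \<in> T \<and> T \<subseteq> topspace M - S" using T by blast
  qed
  have "S \<subseteq> topspace M" unfolding S_def by auto
  then have "closedin M S" unfolding closedin_def using o2 by blast
  then have "S = {} \<or> S = topspace M" using conn o1 unfolding connected_space_clopen_in by blast
  moreover have "p0 \<in> S" using p0 S_def by auto
  ultimately show ?thesis unfolding S_def by blast
qed


theorem theorem3p4:
  fixes M :: "'m topology"
    and A :: "((real^2 \<Rightarrow> 'm) \<times> (real^2) set) set"
    and \<alpha> \<nu> :: "'m \<Rightarrow> real^4"
    and lam :: real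
  assumes surf: "oriented_smooth_surface M A"
    and conn: "connected_space M"
    and imm: "smooth_immersion A \<alpha>"
    and nu: "unit_normal_field A \<alpha> \<nu>"
    and lamnz: "lam \<noteq> 0"
    and umb: "\<forall>(\<psi>, U)\<in>A. \<forall>x\<in>U.
               se (\<alpha> \<circ> \<psi>) (\<nu> (\<psi> x)) x = lam * fE (\<alpha> \<circ> \<psi>) x \<and>
               sf (\<alpha> \<circ> \<psi>) (\<nu> (\<psi> x)) x = lam * fF (\<alpha> \<circ> \<psi>) x \<and>
               sg (\<alpha> \<circ> \<psi>) (\<nu> (\<psi> x)) x = lam * fG (\<alpha> \<circ> \<psi>) x"
    and K: "\<forall>(\<psi>, U)\<in>A. \<forall>x\<in>U. \<forall>n1 n2. normal_frame (\<alpha> \<circ> \<psi>) x n1 n2 \<longrightarrow>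
               gauss_K (\<alpha> \<circ> \<psi>) n1 n2 x \<noteq> lam^2"
  shows "\<exists>c :: real^4. \<forall>p\<in>topspace M. dist (\<alpha> p) c = 1 / \<bar>lam\<bar>"
proof -
  define Hf where "Hf p = lam *\<^sub>R \<alpha> p + \<nu> p" for p
  have chart: "\<exists>\<psi> U x. (\<psi>, U) \<in> A \<and> x \<in> U \<and> p = \<psi> x" if pM: "p \<in> topspace M" for p
  proof -
    have "(\<Union>c\<in>A. fst c ` snd c) = topspace M" using surf unfolding oriented_smooth_surface_def by blast
    then obtain cc where cc: "cc \<in> A" "p \<in> fst cc ` snd cc" using pM by blast
    then obtain x where x: "x \<in> snd cc" "p = fst cc x" by blast
    have "(fst cc, snd cc) \<in> A" using cc(1) by simp
    then show ?thesis using x by blast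
  qed
  have loc: "\<forall>p\<in>topspace M. \<exists>T. openin M T \<and> p \<in> T \<and> (\<forall>q\<in>T. Hf q = Hf p)"
  proof
    fix p assume "p \<in> topspace M"
    then obtain \<psi> U x where c: "(\<psi>, U) \<in> A" "x \<in> U" "p = \<psi> x" using chart by blast
    have par: "is_param M (\<psi>, U)" using surf c(1) unfolding oriented_smooth_surface_def by blast
    then have U: "open U" and oU: "openin M (\<psi> ` U)"
      and hm: "homeomorphic_map (subtopology euclidean U) (subtopology M (\<psi> ` U)) \<psi>"
      unfolding is_param_def by auto
    have sa: "smooth_on U (\<alpha> \<circ> \<psi>)" and inj: "\<forall>x\<in>U. inj (frechet_derivative (\<alpha> \<circ> \<psi>) (at x))"
      using imm c(1) unfolding smooth_immersion_def by auto
    have sn: "smooth_on U (\<nu> \<circ> \<psi>)"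
      and nn: "\<forall>x\<in>U. norm ((\<nu> \<circ> \<psi>) x) = 1 \<and> (\<forall>i. pd (\<alpha> \<circ> \<psi>) i x \<bullet> (\<nu> \<circ> \<psi>) x = 0)"
      using nu c(1) unfolding unit_normal_field_def by auto
    have um: "\<forall>x\<in>U. se (\<alpha> \<circ> \<psi>) ((\<nu> \<circ> \<psi>) x) x = lam * fE (\<alpha> \<circ> \<psi>) x \<and>
        sf (\<alpha> \<circ> \<psi>) ((\<nu> \<circ> \<psi>) x) x = lam * fF (\<alpha> \<circ> \<psi>) x \<and> sg (\<alpha> \<circ> \<psi>) ((\<nu> \<circ> \<psi>) x) x = lam * fG (\<alpha> \<circ> \<psi>) x"
      using umb c(1) by auto
    have KK: "\<forall>x\<in>U. \<forall>n1 n2. normal_frame (\<alpha> \<circ> \<psi>) x n1 n2 \<longrightarrow> gauss_K (\<alpha> \<circ> \<psi>) n1 n2 x \<noteq> lam^2"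
      using K c(1) by auto
    have W: "\<forall>x\<in>U. \<forall>i. pd (\<nu> \<circ> \<psi>) i x + lam *\<^sub>R pd (\<alpha> \<circ> \<psi>) i x = 0"
      by (rule core[OF U sa sn inj nn um KK])
    define h where "h z = (\<nu> \<circ> \<psi>) z + lam *\<^sub>R (\<alpha> \<circ> \<psi>) z" for z
    have hd: "(h has_derivative (\<lambda>v. 0)) (at z)" if "z \<in> U" for z
    proof -
      have d: "(\<nu> \<circ> \<psi>) differentiable (at z)" "(\<alpha> \<circ> \<psi>) differentiable (at z)"
        using smooth_diff[OF sn that] smooth_diff[OF sa that] .
      have hdef: "h = (\<lambda>z. (\<nu> \<circ> \<psi>) z + lam *\<^sub>R (\<alpha> \<circ> \<psi>) z)" unfolding h_def by auto
      show ?thesis unfolding hdef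
        by (rule zero_deriv[OF diff_lin[OF d]]) (use pd_lin[OF d] W that in auto)
    qed
    obtain r where r: "r > 0" "ball x r \<subseteq> U" using U c(2) open_contains_ball by blast
    have hw: "\<And>z. z \<in> ball x r \<Longrightarrow> (h has_derivative (\<lambda>v. 0)) (at z within ball x r)"
      using hd r(2) has_derivative_at_withinI by (meson subsetD)
    obtain k where k: "\<forall>z\<in>ball x r. h z = k"
      using has_derivative_zero_constant[OF convex_ball hw] by blast
    have "openin (subtopology euclidean U) (ball x r)"
      unfolding openin_subtopology using r(2) by (intro exI[of _ "ball x r"]) auto
    then have "openin (subtopology M (\<psi> ` U)) (\<psi> ` ball x r)"
      using homeomorphic_imp_open_map[OF hm, unfolded open_map_def] by blast
    then have oT: "openin M (\<psi> ` ball x r)" using openin_trans_full oU by blast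
    have "\<forall>q\<in>\<psi> ` ball x r. Hf q = k" using k unfolding h_def Hf_def by (auto simp: add.commute)
    moreover have pin: "p \<in> \<psi> ` ball x r" using c(3) r(1) by auto
    ultimately have "\<forall>q\<in>\<psi> ` ball x r. Hf q = Hf p" by (metis (no_types, lifting))
    then show "\<exists>T. openin M T \<and> p \<in> T \<and> (\<forall>q\<in>T. Hf q = Hf p)" using oT pin by blast
  qed
  have nrm: "norm (\<nu> p) = 1" if pM: "p \<in> topspace M" for p
  proof -
    obtain \<psi> U x where c: "(\<psi>, U) \<in> A" "x \<in> U" "p = \<psi> x" using chart[OF pM] by blast
    then show ?thesis using nu unfolding unit_normal_field_def by auto
  qed
  show ?thesis
  proof (cases "topspace M = {}")
    case True
    then show ?thesis by auto
  next
    case False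
    then obtain p0 where p0: "p0 \<in> topspace M" by blast
    have cst: "\<forall>p\<in>topspace M. Hf p = Hf p0" by (rule locconst[OF conn loc p0])
    show ?thesis
    proof (intro exI ballI)
      fix p assume p: "p \<in> topspace M"
      have e: "Hf p0 = Hf p" using cst p by simp
      have "(1 / lam) *\<^sub>R Hf p = \<alpha> p + (1 / lam) *\<^sub>R \<nu> p"
        unfolding Hf_def using lamnz by (simp add: scaleR_add_right)
      then have "\<alpha> p - (1 / lam) *\<^sub>R Hf p0 = - ((1 / lam) *\<^sub>R \<nu> p)"
        unfolding e by simp
      then have "dist (\<alpha> p) ((1 / lam) *\<^sub>R Hf p0) = norm ((1 / lam) *\<^sub>R \<nu> p)"
        by (simp add: dist_norm)
      also have "\<dots> = 1 / \<bar>lam\<bar>" using nrm[OF p] by simp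
      finally show "dist (\<alpha> p) ((1 / lam) *\<^sub>R Hf p0) = 1 / \<bar>lam\<bar>" .
    qed
  qed
qed


end
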